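(* Let $\Gamma$ be a finite Abelian group (written additively, identity $0$) and let $R, B$ be disjoint inverse-closed subsets of $\Gamma$ not containing $0$. Let $G = \mathrm{Cay}(\Gamma, B)$ have all edges coloured $1$ and $H = \mathrm{Cay}(\Gamma, R)$ have all edges coloured $2$, and colour $\mathrm{Cay}(\Gamma, B \cup R)$ by giving each edge the colour it has in $G$ or in $H$. Then in $\mathrm{Cay}(\Gamma, B \cup R)$, for every $v \in \Gamma$: (i) $\deg_1(v) = \deg^G(v)$ and $\deg_2(v) = \deg^H(v)$; (ii) $e_1[v] - e_2[v] = \left(e_1^G[v] - e_2^H[v]\right) + \left(e_2^H(N^G[v]) - e_1^G(N^H[v])\right)$; (iii) if moreover $(R + B) \cap R = \emptyset$ and $e_1^G[v] > e_2^H[v]$, then $e_1[v] > e_2[v]$.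
   Context: For a group $\Gamma$ and an inverse-closed subset $S$ not containing the identity, the Cayley graph $\mathrm{Cay}(\Gamma,S)$ has vertex set $\Gamma$ and edges $\{g,g+s\}$ for $g\in\Gamma$, $s\in S$. $R+B=\{r+b: r\in R, b\in B\}$. For an edge-coloured graph $X$, a set $S$ of vertices and a colour $j$, $e^X_j(S)$ is the number of edges coloured $j$ in the subgraph of $X$ induced by $S$; $N^X[v]$ is the closed neighbourhood of $v$ in $X$; $e^X_j[v]=e^X_j(N^X[v])$; $\deg_j(v)$ is the number of edges of colour $j$ at $v$. Quantities without superscript refer to $\mathrm{Cay}(\Gamma,B\cup R)$. *)

theory Defs
  imports Main
begin

text \<open>Edge set of the Cayley graph Cay(Gamma,S) on the group 'a (Gamma = UNIV);
  edges are unordered pairs {g, g+s}.\<close>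
definition cay_edges :: "'a::ab_group_add set \<Rightarrow> 'a set set" where
  "cay_edges S = {{g, g + s} | g s. s \<in> S}"

definition ecount :: "'a set set \<Rightarrow> ('a set \<Rightarrow> nat) \<Rightarrow> nat \<Rightarrow> 'a set \<Rightarrow> nat" where
  "ecount E c j S = card {e \<in> E. c e = j \<and> e \<subseteq> S}"

definition cnbhd :: "'a set set \<Rightarrow> 'a \<Rightarrow> 'a set" where
  "cnbhd E v = insert v {u. {v, u} \<in> E}"

definition ecount_at :: "'a set set \<Rightarrow> ('a set \<Rightarrow> nat) \<Rightarrow> nat \<Rightarrow> 'a \<Rightarrow> nat" where
  "ecount_at E c j v = ecount E c j (cnbhd E v)"

definition cdeg :: "'a set set \<Rightarrow> ('a set \<Rightarrow> nat) \<Rightarrow> nat \<Rightarrow> 'a \<Rightarrow> nat" where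
  "cdeg E c j v = card {e \<in> E. v \<in> e \<and> c e = j}"

definition gdeg :: "'a set set \<Rightarrow> 'a \<Rightarrow> nat" where
  "gdeg E v = card {e \<in> E. v \<in> e}"

definition union_col :: "'a::ab_group_add set \<Rightarrow> 'a set \<Rightarrow> nat" where
  "union_col B e = (if e \<in> cay_edges B then 1 else 2)"

end

theory Submission
  imports Defs
begin

definition cnt :: "'a::ab_group_add set \<Rightarrow> 'a set \<Rightarrow> 'a set \<Rightarrow> nat" where
  "cnt X Y D = card {(a,b). a \<in> X \<and> b \<in> Y \<and> b - a \<in> D}"

lemma cnt_un1:
  fixes X :: "'a::{ab_group_add,finite} set"
  assumes "X \<inter> X' = {}"
  shows "cnt (X \<union> X') Y D = cnt X Y D + cnt X' Y D"
proof -
  have "{(a,b). a \<in> X \<union> X' \<and> b \<in> Y \<and> b - a \<in> D}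
     = {(a,b). a \<in> X \<and> b \<in> Y \<and> b - a \<in> D} \<union> {(a,b). a \<in> X' \<and> b \<in> Y \<and> b - a \<in> D}" by auto
  then show ?thesis unfolding cnt_def
    by (simp only:) (rule card_Un_disjoint, simp, simp, use assms in blast)
qed

lemma cnt_un2:
  fixes X :: "'a::{ab_group_add,finite} set"
  assumes "Y \<inter> Y' = {}"
  shows "cnt X (Y \<union> Y') D = cnt X Y D + cnt X Y' D"
proof -
  have "{(a,b). a \<in> X \<and> b \<in> Y \<union> Y' \<and> b - a \<in> D}
     = {(a,b). a \<in> X \<and> b \<in> Y \<and> b - a \<in> D} \<union> {(a,b). a \<in> X \<and> b \<in> Y' \<and> b - a \<in> D}" by auto
  then show ?thesis unfolding cnt_def
    by (simp only:) (rule card_Un_disjoint, simp, simp, use assms in blast)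
qed

lemma cnt_swap:
  fixes X :: "'a::{ab_group_add,finite} set"
  assumes "\<forall>s\<in>D. - s \<in> D"
  shows "cnt X Y D = cnt Y X D"
proof -
  have "{(a,b). a \<in> Y \<and> b \<in> X \<and> b - a \<in> D} = prod.swap ` {(a,b). a \<in> X \<and> b \<in> Y \<and> b - a \<in> D}"
  proof (rule set_eqI, rule iffI)
    fix p assume "p \<in> {(a,b). a \<in> Y \<and> b \<in> X \<and> b - a \<in> D}"
    then obtain a b where p: "p = (a,b)" "a \<in> Y" "b \<in> X" "b - a \<in> D" by auto
    then have "- (b - a) \<in> D" using assms by blast
    then have "a - b \<in> D" by simp
    then show "p \<in> prod.swap ` {(a,b). a \<in> X \<and> b \<in> Y \<and> b - a \<in> D}"
      using p by (auto intro!: image_eqI[where x="(b,a)"])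
  next
    fix p assume "p \<in> prod.swap ` {(a,b). a \<in> X \<and> b \<in> Y \<and> b - a \<in> D}"
    then obtain a b where p: "p = (b,a)" "a \<in> X" "b \<in> Y" "b - a \<in> D" by auto
    then have "- (b - a) \<in> D" using assms by blast
    then have "a - b \<in> D" by simp
    then show "p \<in> {(a,b). a \<in> Y \<and> b \<in> X \<and> b - a \<in> D}" using p by auto
  qed
  then show ?thesis unfolding cnt_def by (simp add: card_image)
qed

lemma cnt_tri:
  fixes X :: "'a::{ab_group_add,finite} set"
  shows "cnt X Y D = cnt D Y X"
proof -
  have "{(a,b). a \<in> D \<and> b \<in> Y \<and> b - a \<in> X} = (\<lambda>(a,b). (b - a, b)) ` {(a,b). a \<in> X \<and> b \<in> Y \<and> b - a \<in> D}"
  proof (rule set_eqI, rule iffI)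
    fix p assume "p \<in> {(a,b). a \<in> D \<and> b \<in> Y \<and> b - a \<in> X}"
    then obtain a b where p: "p = (a,b)" "a \<in> D" "b \<in> Y" "b - a \<in> X" by auto
    show "p \<in> (\<lambda>(a,b). (b - a, b)) ` {(a,b). a \<in> X \<and> b \<in> Y \<and> b - a \<in> D}"
      using p by (auto intro!: image_eqI[where x="(b - a,b)"])
  next
    fix p assume "p \<in> (\<lambda>(a,b). (b - a, b)) ` {(a,b). a \<in> X \<and> b \<in> Y \<and> b - a \<in> D}"
    then show "p \<in> {(a,b). a \<in> D \<and> b \<in> Y \<and> b - a \<in> X}" by auto
  qed
  moreover have "inj_on (\<lambda>(a,b). (b - a, b)) A" for A :: "('a \<times> 'a) set"
    by (auto simp: inj_on_def)
  ultimately show ?thesis unfolding cnt_def by (simp add: card_image)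
qed

lemma cay_mem:
  fixes D :: "'a::ab_group_add set"
  assumes "\<forall>s\<in>D. - s \<in> D"
  shows "{x, y} \<in> cay_edges D \<longleftrightarrow> y - x \<in> D"
proof
  assume "{x, y} \<in> cay_edges D"
  then obtain g s where e: "{x,y} = {g, g+s}" "s \<in> D" unfolding cay_edges_def by auto
  then have "(x = g \<and> y = g + s) \<or> (x = g + s \<and> y = g)" by (auto simp: doubleton_eq_iff)
  then show "y - x \<in> D"
  proof
    assume "x = g \<and> y = g + s" then show ?thesis using e by simp
  next
    assume "x = g + s \<and> y = g"
    then have "y - x = - s" by simp
    then show ?thesis using e assms by simp
  qed
next
  assume "y - x \<in> D"
  moreover have "{x, y} = {x, x + (y - x)}" by simp
  ultimately show "{x, y} \<in> cay_edges D" unfolding cay_edges_def by blast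
qed

lemma cnbhd_cay:
  fixes D :: "'a::ab_group_add set"
  assumes "\<forall>s\<in>D. - s \<in> D" "0 \<notin> D"
  shows "cnbhd (cay_edges D) v = (+) v ` ({0} \<union> D)"
proof -
  have "{u. {v, u} \<in> cay_edges D} = (+) v ` D"
  proof (rule set_eqI)
    fix u
    have "u \<in> (+) v ` D \<longleftrightarrow> u - v \<in> D"
      by (auto intro!: image_eqI[where x="u - v"])
    then show "u \<in> {u. {v, u} \<in> cay_edges D} \<longleftrightarrow> u \<in> (+) v ` D"
      using cay_mem[OF assms(1)] by simp
  qed
  then show ?thesis unfolding cnbhd_def by simp
qed

lemma edge_pairs:
  fixes D :: "'a::{ab_group_add,finite} set"
  assumes sym: "\<forall>s\<in>D. - s \<in> D" and z: "0 \<notin> D"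
  shows "2 * card {e \<in> cay_edges D. e \<subseteq> S} = card {(x,y). x \<in> S \<and> y \<in> S \<and> y - x \<in> D}"
proof -
  let ?E = "{e \<in> cay_edges D. e \<subseteq> S}"
  let ?f = "\<lambda>e. {(x,y). {x,y} = e}"
  have eq: "{(x,y). x \<in> S \<and> y \<in> S \<and> y - x \<in> D} = (\<Union>e\<in>?E. ?f e)"
    using cay_mem[OF sym] by auto
  have c2: "card (?f e) = 2" if "e \<in> ?E" for e
  proof -
    have "e \<in> cay_edges D" using that by simp
    then obtain g s where e: "e = {g, g+s}" "s \<in> D" unfolding cay_edges_def by blast
    have ne: "g \<noteq> g + s" using e z by auto
    have "?f e = {(g, g+s), (g+s, g)}" using e by (auto simp: doubleton_eq_iff)
    then show ?thesis using ne by simp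
  qed
  have "card (\<Union>e\<in>?E. ?f e) = (\<Sum>e\<in>?E. card (?f e))"
    by (rule card_UN_disjoint) auto
  also have "\<dots> = (\<Sum>e\<in>?E. 2)" using c2 by simp
  finally show ?thesis using eq by simp
qed

lemma transl:
  fixes T :: "'a::{ab_group_add,finite} set"
  shows "card {(x,y). x \<in> (+) v ` T \<and> y \<in> (+) v ` T \<and> y - x \<in> D} = cnt T T D"
proof -
  have "{(x,y). x \<in> (+) v ` T \<and> y \<in> (+) v ` T \<and> y - x \<in> D}
      = (\<lambda>(a,b). (v + a, v + b)) ` {(a,b). a \<in> T \<and> b \<in> T \<and> b - a \<in> D}"
    by (auto simp: image_iff)
  moreover have "inj_on (\<lambda>(a,b). (v + a, v + b)) A" for A :: "('a \<times> 'a) set"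
    by (auto simp: inj_on_def)
  ultimately show ?thesis unfolding cnt_def by (simp add: card_image)
qed

lemma cnt_exp2:
  fixes X1 :: "'a::{ab_group_add,finite} set"
  assumes "X1 \<inter> X2 = {}"
  shows "cnt (X1 \<union> X2) (X1 \<union> X2) D = cnt X1 X1 D + cnt X1 X2 D + cnt X2 X1 D + cnt X2 X2 D"
  using assms by (simp add: cnt_un1 cnt_un2)

lemma cnt_exp3:
  fixes X1 :: "'a::{ab_group_add,finite} set"
  assumes "X1 \<inter> X2 = {}" "X1 \<inter> X3 = {}" "X2 \<inter> X3 = {}"
  shows "cnt (X1 \<union> (X2 \<union> X3)) (X1 \<union> (X2 \<union> X3)) D =
     cnt X1 X1 D + cnt X1 X2 D + cnt X1 X3 D + cnt X2 X1 D + cnt X2 X2 D + cnt X2 X3 D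
   + cnt X3 X1 D + cnt X3 X2 D + cnt X3 X3 D"
proof -
  have d: "X1 \<inter> (X2 \<union> X3) = {}" using assms by blast
  show ?thesis
    using assms d by (simp add: cnt_un1[OF d] cnt_un2[OF d] cnt_un1 cnt_un2)
qed

lemma cnt_zero:
  assumes "\<forall>a\<in>X. \<forall>b\<in>Y. b - a \<notin> D"
  shows "cnt X Y D = 0"
proof -
  have "{(a,b). a \<in> X \<and> b \<in> Y \<and> b - a \<in> D} = {}"
  proof (rule equals0I)
    fix p assume "p \<in> {(a,b). a \<in> X \<and> b \<in> Y \<and> b - a \<in> D}"
    then obtain a b where "p = (a,b)" "a \<in> X" "b \<in> Y" "b - a \<in> D" by blast
    then show False using assms by blast
  qed
  then show ?thesis unfolding cnt_def by (simp only: card.empty)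
qed

theorem proposition2p3:
  fixes B R :: "'a::{ab_group_add, finite} set" and v :: 'a
  assumes disj: "B \<inter> R = {}"
    and Binv: "\<forall>s\<in>B. - s \<in> B" and Rinv: "\<forall>s\<in>R. - s \<in> R"
    and B0: "0 \<notin> B" and R0: "0 \<notin> R"
  shows "(cdeg (cay_edges (B \<union> R)) (union_col B) 1 v = gdeg (cay_edges B) v
      \<and> cdeg (cay_edges (B \<union> R)) (union_col B) 2 v = gdeg (cay_edges R) v)
    \<and> int (ecount_at (cay_edges (B \<union> R)) (union_col B) 1 v)
           - int (ecount_at (cay_edges (B \<union> R)) (union_col B) 2 v)
         = (int (ecount_at (cay_edges B) (\<lambda>_. 1) 1 v) - int (ecount_at (cay_edges R) (\<lambda>_. 2) 2 v))
           + (int (ecount (cay_edges R) (\<lambda>_. 2) 2 (cnbhd (cay_edges B) v))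
              - int (ecount (cay_edges B) (\<lambda>_. 1) 1 (cnbhd (cay_edges R) v)))
    \<and> ({r + b | r b. r \<in> R \<and> b \<in> B} \<inter> R = {} \<longrightarrow>
         ecount_at (cay_edges B) (\<lambda>_. 1) 1 v > ecount_at (cay_edges R) (\<lambda>_. 2) 2 v \<longrightarrow>
         ecount_at (cay_edges (B \<union> R)) (union_col B) 1 v > ecount_at (cay_edges (B \<union> R)) (union_col B) 2 v)"
proof -
  let ?EB = "cay_edges B" and ?ER = "cay_edges R" and ?E = "cay_edges (B \<union> R)"
  have BRinv: "\<forall>s\<in>B \<union> R. - s \<in> B \<union> R" using Binv Rinv by blast
  have BR0: "0 \<notin> B \<union> R" using B0 R0 by blast
  have Eun: "?E = ?EB \<union> ?ER" unfolding cay_edges_def by blast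
  have Edisj: "?EB \<inter> ?ER = {}"
  proof (rule ccontr)
    assume "?EB \<inter> ?ER \<noteq> {}"
    then obtain e where e1: "e \<in> ?EB" and e2: "e \<in> ?ER" by blast
    from e1 obtain g s where e: "e = {g, g+s}" "s \<in> B" unfolding cay_edges_def by blast
    have "(g + s) - g \<in> R" using e2 e cay_mem[OF Rinv] by simp
    then show False using e disj by auto
  qed
  have col1: "{e \<in> ?E. union_col B e = 1 \<and> P e} = {e \<in> ?EB. P e}" for P
    using Eun by (auto simp: union_col_def)
  have col2: "{e \<in> ?E. union_col B e = 2 \<and> P e} = {e \<in> ?ER. P e}" for P
    using Eun Edisj by (auto simp: union_col_def)
  have part1: "cdeg ?E (union_col B) 1 v = gdeg ?EB v \<and> cdeg ?E (union_col B) 2 v = gdeg ?ER v"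
    unfolding cdeg_def gdeg_def using col1[of "\<lambda>e. v \<in> e"] col2[of "\<lambda>e. v \<in> e"]
    by (simp add: conj_commute)
  define c :: "'a set \<Rightarrow> 'a set \<Rightarrow> nat" where "c D S = card {e \<in> cay_edges D. e \<subseteq> S}" for D S
  define Z :: "'a set" where "Z = {0}"
  have NG: "cnbhd ?EB v = (+) v ` (Z \<union> B)" using cnbhd_cay[OF Binv B0] Z_def by simp
  have NH: "cnbhd ?ER v = (+) v ` (Z \<union> R)" using cnbhd_cay[OF Rinv R0] Z_def by simp
  have N: "cnbhd ?E v = (+) v ` (Z \<union> (B \<union> R))" using cnbhd_cay[OF BRinv BR0] Z_def by simp
  have e1N: "ecount_at ?E (union_col B) 1 v = c B (cnbhd ?E v)"
    unfolding ecount_at_def ecount_def c_def using col1[of "\<lambda>e. e \<subseteq> cnbhd ?E v"] by simp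
  have e2N: "ecount_at ?E (union_col B) 2 v = c R (cnbhd ?E v)"
    unfolding ecount_at_def ecount_def c_def using col2[of "\<lambda>e. e \<subseteq> cnbhd ?E v"] by simp
  have e1G: "ecount_at ?EB (\<lambda>_. 1) 1 v = c B (cnbhd ?EB v)"
    unfolding ecount_at_def ecount_def c_def by simp
  have e2H: "ecount_at ?ER (\<lambda>_. 2) 2 v = c R (cnbhd ?ER v)"
    unfolding ecount_at_def ecount_def c_def by simp
  have e2HG: "ecount ?ER (\<lambda>_. 2) 2 (cnbhd ?EB v) = c R (cnbhd ?EB v)"
    unfolding ecount_def c_def by simp
  have e1GH: "ecount ?EB (\<lambda>_. 1) 1 (cnbhd ?ER v) = c B (cnbhd ?ER v)"
    unfolding ecount_def c_def by simp
  have cc: "2 * c D ((+) v ` T) = cnt T T D" if "\<forall>s\<in>D. - s \<in> D" "0 \<notin> D" for D T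
    unfolding c_def using edge_pairs[OF that, of "(+) v ` T"] transl[of v T D] by simp
  have dZB: "Z \<inter> B = {}" and dZR: "Z \<inter> R = {}" using B0 R0 Z_def by auto
  have zZZ: "cnt Z Z D = 0" if "0 \<notin> D" for D using that Z_def by (auto intro!: cnt_zero)
  have z1: "cnt Z R B = 0" "cnt R Z B = 0" "cnt Z B R = 0" "cnt B Z R = 0"
    using disj Binv Rinv Z_def by (auto intro!: cnt_zero)
  have s1: "cnt B R B = cnt R B B" by (rule cnt_swap[OF Binv])
  have t1: "cnt R B B = cnt B B R" by (rule cnt_tri)
  have s2: "cnt R B R = cnt B R R" by (rule cnt_swap[OF Rinv])
  have t2: "cnt B R R = cnt R R B" by (rule cnt_tri)
  have xNB: "2 * c B (cnbhd ?E v) = cnt Z Z B + cnt Z B B + cnt Z R B + cnt B Z B + cnt B B B + cnt B R B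
   + cnt R Z B + cnt R B B + cnt R R B"
    using N cc[OF Binv B0] cnt_exp3[OF dZB dZR disj] by simp
  have xNR: "2 * c R (cnbhd ?E v) = cnt Z Z R + cnt Z B R + cnt Z R R + cnt B Z R + cnt B B R + cnt B R R
   + cnt R Z R + cnt R B R + cnt R R R"
    using N cc[OF Rinv R0] cnt_exp3[OF dZB dZR disj] by simp
  have xGB: "2 * c B (cnbhd ?EB v) = cnt Z Z B + cnt Z B B + cnt B Z B + cnt B B B"
    using NG cc[OF Binv B0] cnt_exp2[OF dZB] by simp
  have xGR: "2 * c R (cnbhd ?EB v) = cnt Z Z R + cnt Z B R + cnt B Z R + cnt B B R"
    using NG cc[OF Rinv R0] cnt_exp2[OF dZB] by simp
  have xHB: "2 * c B (cnbhd ?ER v) = cnt Z Z B + cnt Z R B + cnt R Z B + cnt R R B"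
    using NH cc[OF Binv B0] cnt_exp2[OF dZR] by simp
  have xHR: "2 * c R (cnbhd ?ER v) = cnt Z Z R + cnt Z R R + cnt R Z R + cnt R R R"
    using NH cc[OF Rinv R0] cnt_exp2[OF dZR] by simp
  have main: "int (c B (cnbhd ?E v)) - int (c R (cnbhd ?E v))
     = (int (c B (cnbhd ?EB v)) - int (c R (cnbhd ?ER v)))
       + (int (c R (cnbhd ?EB v)) - int (c B (cnbhd ?ER v)))"
  proof -
    have "2 * (int (c B (cnbhd ?E v)) - int (c R (cnbhd ?E v)))
     = 2 * ((int (c B (cnbhd ?EB v)) - int (c R (cnbhd ?ER v)))
       + (int (c R (cnbhd ?EB v)) - int (c B (cnbhd ?ER v))))"
    proof -
      have a: "int (2 * c B (cnbhd ?E v)) = int (cnt Z Z B + cnt Z B B + cnt Z R B + cnt B Z B + cnt B B B + cnt B R B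
   + cnt R Z B + cnt R B B + cnt R R B)" using xNB by simp
      have b: "int (2 * c R (cnbhd ?E v)) = int (cnt Z Z R + cnt Z B R + cnt Z R R + cnt B Z R + cnt B B R + cnt B R R
   + cnt R Z R + cnt R B R + cnt R R R)" using xNR by simp
      have c1: "int (2 * c B (cnbhd ?EB v)) = int (cnt Z Z B + cnt Z B B + cnt B Z B + cnt B B B)" using xGB by simp
      have c2: "int (2 * c R (cnbhd ?EB v)) = int (cnt Z Z R + cnt Z B R + cnt B Z R + cnt B B R)" using xGR by simp
      have c3: "int (2 * c B (cnbhd ?ER v)) = int (cnt Z Z B + cnt Z R B + cnt R Z B + cnt R R B)" using xHB by simp
      have c4: "int (2 * c R (cnbhd ?ER v)) = int (cnt Z Z R + cnt Z R R + cnt R Z R + cnt R R R)" using xHR by simp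
      show ?thesis using a b c1 c2 c3 c4 z1 s1 t1 s2 t2 zZZ[OF B0] zZZ[OF R0]
        by (simp only: of_nat_add of_nat_mult of_nat_numeral of_nat_0) (simp add: algebra_simps)
    qed
    then show ?thesis by simp
  qed
  have part3: "({r + b | r b. r \<in> R \<and> b \<in> B} \<inter> R = {} \<longrightarrow>
         ecount_at ?EB (\<lambda>_. 1) 1 v > ecount_at ?ER (\<lambda>_. 2) 2 v \<longrightarrow>
         ecount_at ?E (union_col B) 1 v > ecount_at ?E (union_col B) 2 v)"
  proof (intro impI)
    assume H: "{r + b | r b. r \<in> R \<and> b \<in> B} \<inter> R = {}"
      and gt: "ecount_at ?EB (\<lambda>_. 1) 1 v > ecount_at ?ER (\<lambda>_. 2) 2 v"
    have "cnt R R B = 0"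
    proof (rule cnt_zero, intro ballI)
      fix a b assume ab: "a \<in> R" "b \<in> R"
      show "b - a \<notin> B"
      proof
        assume ba: "b - a \<in> B"
        have "b = a + (b - a)" by simp
        then have "b \<in> {r + b | r b. r \<in> R \<and> b \<in> B}" using ab ba by blast
        then show False using H ab by blast
      qed
    qed
    then have z0: "c B (cnbhd ?ER v) = 0" using xHB z1 zZZ[OF B0] by simp
    have gt': "c B (cnbhd ?EB v) > c R (cnbhd ?ER v)" using gt unfolding e1G e2H .
    show "ecount_at ?E (union_col B) 1 v > ecount_at ?E (union_col B) 2 v"
      unfolding e1N e2N using main gt' z0 by linarith
  qed
  have part2: "int (ecount_at ?E (union_col B) 1 v)
           - int (ecount_at ?E (union_col B) 2 v)
         = (int (ecount_at ?EB (\<lambda>_. 1) 1 v) - int (ecount_at ?ER (\<lambda>_. 2) 2 v))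
           + (int (ecount ?ER (\<lambda>_. 2) 2 (cnbhd ?EB v))
              - int (ecount ?EB (\<lambda>_. 1) 1 (cnbhd ?ER v)))"
    unfolding e1N e2N e1G e2H e2HG e1GH by (rule main)
  show ?thesis using part1 part2 part3 by blast
qed

end
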